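(* Let $M=\mathrm{Mon}\langle\Sigma\mid R\rangle$ be a finitely presented monoid and $\mathfrak{R}$ a complete rewriting system for $M$. Let $u,v\in\Sigma^*$. If there exists a word $z$ such that $u\sim z$ and $v\sim z$, then $u\equiv_M v$.
   Context: $=_M$ is equality in $M$. A rewriting system is a set of rules $l\to r$ ($l,r\in\Sigma^*$); $plq\to prq$ is one rewriting step; $\mathfrak{R}$ is complete for $M$ if terminating, confluent, and its generated congruence on $\Sigma^*$ is $=_M$. $u\rightsquigarrow v$ means some cyclic conjugate $\tilde u$ of $u$ in $\Sigma^*$ (possibly $u$) satisfies $\tilde u\to v$; $\rightsquigarrow^*$ is its reflexive–transitive closure. For words $u,v$, $u\sim v$ means $u\rightsquigarrow^* v$ and $v\rightsquigarrow^* u$. $u\equiv_M v$ means there exist $x,y\in\Sigma^*$ with $ux=_M xv$ and $yu=_M vy$. *)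

theory Defs
  imports Main
begin

text \<open>Words over the alphabet Sig are lists whose letters lie in Sig (the set lists Sig).
  A rewriting system (or a set of defining relations) is a set of pairs of words.\<close>

definition rstep :: "'a set \<Rightarrow> ('a list \<times> 'a list) set \<Rightarrow> ('a list \<times> 'a list) set" where
  "rstep Sig Rw = {(p @ l @ q, p @ r @ q) | p l r q.
      (l, r) \<in> Rw \<and> p \<in> lists Sig \<and> q \<in> lists Sig}"

definition gen_cong :: "'a set \<Rightarrow> ('a list \<times> 'a list) set \<Rightarrow> ('a list \<times> 'a list) set" where
  "gen_cong Sig R = (rstep Sig R \<union> (rstep Sig R)\<inverse>)\<^sup>* \<inter> (lists Sig \<times> lists Sig)"

definition eqM :: "'a set \<Rightarrow> ('a list \<times> 'a list) set \<Rightarrow> 'a list \<Rightarrow> 'a list \<Rightarrow> bool" where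
  "eqM Sig R u v \<longleftrightarrow> (u, v) \<in> gen_cong Sig R"

definition terminating :: "'a set \<Rightarrow> ('a list \<times> 'a list) set \<Rightarrow> bool" where
  "terminating Sig Rw \<longleftrightarrow> wf ((rstep Sig Rw)\<inverse>)"

definition confluent :: "'a set \<Rightarrow> ('a list \<times> 'a list) set \<Rightarrow> bool" where
  "confluent Sig Rw \<longleftrightarrow> (\<forall>u v w. (u, v) \<in> (rstep Sig Rw)\<^sup>* \<and> (u, w) \<in> (rstep Sig Rw)\<^sup>*
      \<longrightarrow> (\<exists>x. (v, x) \<in> (rstep Sig Rw)\<^sup>* \<and> (w, x) \<in> (rstep Sig Rw)\<^sup>*))"

definition complete_for :: "'a set \<Rightarrow> ('a list \<times> 'a list) set \<Rightarrow> ('a list \<times> 'a list) set \<Rightarrow> bool" where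
  "complete_for Sig R Rw \<longleftrightarrow> terminating Sig Rw \<and> confluent Sig Rw
      \<and> gen_cong Sig Rw = gen_cong Sig R"

definition cstep :: "'a set \<Rightarrow> ('a list \<times> 'a list) set \<Rightarrow> ('a list \<times> 'a list) set" where
  "cstep Sig Rw = {(u, v) | u v a b. u = a @ b \<and> (b @ a, v) \<in> rstep Sig Rw}"

definition csim :: "'a set \<Rightarrow> ('a list \<times> 'a list) set \<Rightarrow> 'a list \<Rightarrow> 'a list \<Rightarrow> bool" where
  "csim Sig Rw u v \<longleftrightarrow> (u, v) \<in> (cstep Sig Rw)\<^sup>* \<and> (v, u) \<in> (cstep Sig Rw)\<^sup>*"

definition conjM :: "'a set \<Rightarrow> ('a list \<times> 'a list) set \<Rightarrow> 'a list \<Rightarrow> 'a list \<Rightarrow> bool" where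
  "conjM Sig R u v \<longleftrightarrow> (\<exists>x \<in> lists Sig. \<exists>y \<in> lists Sig.
      eqM Sig R (u @ x) (x @ v) \<and> eqM Sig R (y @ u) (v @ y))"

end

theory Submission
  imports Defs
begin

lemma rstep_ctx:
  assumes "(s,t) \<in> rstep Sig R" "p \<in> lists Sig" "q \<in> lists Sig"
  shows "(p@s@q, p@t@q) \<in> rstep Sig R"
proof -
  from assms(1) obtain p' l r q' where "s = p'@l@q'" "t = p'@r@q'" "(l,r) \<in> R"
    "p' \<in> lists Sig" "q' \<in> lists Sig" unfolding rstep_def by blast
  then have "p@s@q = (p@p')@l@(q'@q) \<and> p@t@q = (p@p')@r@(q'@q) \<and> (l,r) \<in> R
     \<and> p@p' \<in> lists Sig \<and> q'@q \<in> lists Sig" using assms(2,3) by simp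
  thus ?thesis unfolding rstep_def by blast
qed

lemma E_ctx:
  assumes "(s,t) \<in> (rstep Sig R \<union> (rstep Sig R)\<inverse>)\<^sup>*" "p \<in> lists Sig" "q \<in> lists Sig"
  shows "(p@s@q, p@t@q) \<in> (rstep Sig R \<union> (rstep Sig R)\<inverse>)\<^sup>*"
  using assms(1)
proof (induction rule: rtrancl_induct)
  case base then show ?case by simp
next
  case (step y z)
  then have "(p@y@q, p@z@q) \<in> rstep Sig R \<union> (rstep Sig R)\<inverse>"
    using rstep_ctx[OF _ assms(2,3)] by auto
  with step.IH show ?case by (rule rtrancl_into_rtrancl)
qed

lemma eqM_ctx:
  assumes "eqM Sig R s t" "p \<in> lists Sig" "q \<in> lists Sig"
  shows "eqM Sig R (p@s@q) (p@t@q)"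
  using assms E_ctx[of s t Sig R p q] unfolding eqM_def gen_cong_def by auto

lemma eqM_trans: "eqM Sig R a b \<Longrightarrow> eqM Sig R b c \<Longrightarrow> eqM Sig R a c"
  unfolding eqM_def gen_cong_def by (auto intro: rtrancl_trans)

lemma eqM_sym: "eqM Sig R a b \<Longrightarrow> eqM Sig R b a"
proof -
  assume "eqM Sig R a b"
  then have h: "(a,b) \<in> (rstep Sig R \<union> (rstep Sig R)\<inverse>)\<^sup>*" "a \<in> lists Sig" "b \<in> lists Sig"
    unfolding eqM_def gen_cong_def by auto
  have "(b,a) \<in> ((rstep Sig R \<union> (rstep Sig R)\<inverse>)\<^sup>*)\<inverse>" using h(1) by simp
  also have "((rstep Sig R \<union> (rstep Sig R)\<inverse>)\<^sup>*)\<inverse> = ((rstep Sig R \<union> (rstep Sig R)\<inverse>)\<inverse>)\<^sup>*"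
    by (rule rtrancl_converse[symmetric])
  also have "(rstep Sig R \<union> (rstep Sig R)\<inverse>)\<inverse> = rstep Sig R \<union> (rstep Sig R)\<inverse>" by auto
  finally show ?thesis using h unfolding eqM_def gen_cong_def by auto
qed

lemma eqM_refl: "a \<in> lists Sig \<Longrightarrow> eqM Sig R a a"
  unfolding eqM_def gen_cong_def by auto

lemma conjM_refl: "a \<in> lists Sig \<Longrightarrow> conjM Sig R a a"
  unfolding conjM_def by (auto intro!: bexI[of _ "[]"] eqM_refl)

lemma conjM_sym: "conjM Sig R a b \<Longrightarrow> conjM Sig R b a"
  unfolding conjM_def by (meson eqM_sym)

lemma conjM_trans:
  assumes "conjM Sig R a b" "conjM Sig R b c"
  shows "conjM Sig R a c"
proof -
  from assms obtain x1 y1 x2 y2 where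
    h: "x1 \<in> lists Sig" "y1 \<in> lists Sig" "x2 \<in> lists Sig" "y2 \<in> lists Sig"
    "eqM Sig R (a@x1) (x1@b)" "eqM Sig R (y1@a) (b@y1)"
    "eqM Sig R (b@x2) (x2@c)" "eqM Sig R (y2@b) (c@y2)"
    unfolding conjM_def by blast
  have "eqM Sig R ([]@(a@x1)@x2) ([]@(x1@b)@x2)" by (rule eqM_ctx[OF h(5)]) (use h in auto)
  moreover have "eqM Sig R (x1@(b@x2)@[]) (x1@(x2@c)@[])" by (rule eqM_ctx[OF h(7)]) (use h in auto)
  ultimately have 1: "eqM Sig R (a@(x1@x2)) ((x1@x2)@c)" by (auto dest: eqM_trans)
  have "eqM Sig R (y2@(y1@a)@[]) (y2@(b@y1)@[])" by (rule eqM_ctx[OF h(6)]) (use h in auto)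
  moreover have "eqM Sig R ([]@(y2@b)@y1) ([]@(c@y2)@y1)" by (rule eqM_ctx[OF h(8)]) (use h in auto)
  ultimately have 2: "eqM Sig R ((y2@y1)@a) (c@(y2@y1))" by (auto dest: eqM_trans)
  have "x1@x2 \<in> lists Sig" "y2@y1 \<in> lists Sig" using h(1-4) by auto
  then show ?thesis unfolding conjM_def using 1 2 by blast
qed

lemma rstep_lists:
  assumes "(s,t) \<in> rstep Sig Rw" "Rw \<subseteq> lists Sig \<times> lists Sig"
  shows "s \<in> lists Sig \<and> t \<in> lists Sig"
proof -
  from assms(1) obtain p l r q where "s = p@l@q" "t = p@r@q" "(l,r) \<in> Rw"
    "p \<in> lists Sig" "q \<in> lists Sig" unfolding rstep_def by blast
  moreover have "l \<in> lists Sig" "r \<in> lists Sig" using assms(2) \<open>(l,r) \<in> Rw\<close> by auto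
  ultimately show ?thesis by simp
qed

lemma cstep_conjM:
  assumes "(s,t) \<in> cstep Sig Rw" "s \<in> lists Sig" "Rw \<subseteq> lists Sig \<times> lists Sig"
    "gen_cong Sig Rw = gen_cong Sig R"
  shows "conjM Sig R s t \<and> t \<in> lists Sig"
proof -
  from assms(1) obtain a b where ab: "s = a@b" "(b@a, t) \<in> rstep Sig Rw"
    unfolding cstep_def by blast
  have l: "a \<in> lists Sig" "b \<in> lists Sig" using ab assms(2) by auto
  have t: "t \<in> lists Sig" using rstep_lists[OF ab(2) assms(3)] by simp
  have ba: "b@a \<in> lists Sig" using l by simp
  have "(b@a, t) \<in> (rstep Sig Rw \<union> (rstep Sig Rw)\<inverse>)\<^sup>*" using ab(2) by blast
  then have "(b@a, t) \<in> gen_cong Sig Rw" unfolding gen_cong_def using ba t by blast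
  then have e: "eqM Sig R (b@a) t" unfolding eqM_def using assms(4) by simp
  have 1: "eqM Sig R (s@a) (a@t)"
    using eqM_ctx[OF e, of a "[]"] l ab(1) by simp
  have 2: "eqM Sig R (b@s) (t@b)"
    using eqM_ctx[OF e, of "[]" b] l ab(1) by simp
  show ?thesis unfolding conjM_def using 1 2 l t by blast
qed

lemma csteps_conjM:
  assumes "(s,t) \<in> (cstep Sig Rw)\<^sup>*" "s \<in> lists Sig" "Rw \<subseteq> lists Sig \<times> lists Sig"
    "gen_cong Sig Rw = gen_cong Sig R"
  shows "conjM Sig R s t"
proof -
  have "conjM Sig R s t \<and> t \<in> lists Sig" using assms(1)
  proof (induction rule: rtrancl_induct)
    case base then show ?case using conjM_refl[of s Sig R] assms(2) by simp
  next
    case (step y z)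
    have c: "conjM Sig R y z \<and> z \<in> lists Sig" using cstep_conjM[OF step(2) _ assms(3,4)] step(3) by simp
    have "conjM Sig R s z" using conjM_trans[of Sig R s y z] step(3) c by simp
    then show ?case using c by simp
  qed
  thus ?thesis by simp
qed

theorem proposition7p3:
  fixes Sig :: "'a set" and R Rw :: "('a list \<times> 'a list) set" and u v :: "'a list"
  assumes "finite Sig" and "finite R"
    and "R \<subseteq> lists Sig \<times> lists Sig"
    and "Rw \<subseteq> lists Sig \<times> lists Sig"
    and "complete_for Sig R Rw"
    and "u \<in> lists Sig" and "v \<in> lists Sig"
    and "\<exists>z \<in> lists Sig. csim Sig Rw u z \<and> csim Sig Rw v z"
  shows "conjM Sig R u v"
proof -
  have g: "gen_cong Sig Rw = gen_cong Sig R" using assms(5) unfolding complete_for_def by simp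
  from assms(8) obtain z where "(u,z) \<in> (cstep Sig Rw)\<^sup>*" "(v,z) \<in> (cstep Sig Rw)\<^sup>*"
    unfolding csim_def by blast
  then have "conjM Sig R u z" "conjM Sig R v z"
    using csteps_conjM[OF _ _ assms(4) g] assms(6,7) by auto
  then show ?thesis using conjM_sym[of Sig R v z] conjM_trans[of Sig R u z v] by simp
qed

end
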